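(* Let $\mathcal{N}$ be a finite set of polyphase nodes, each with the same finite set of phases $\mathcal{P}$, and let the branch graph $\mathcal{B}=(\mathcal{N},\mathcal{L})$, $\mathcal{L}\subseteq\mathcal{N}\times\mathcal{N}$, be weakly connected. Assume: (i) every branch $\ell\in\mathcal{L}$ has a complex $|\mathcal{P}|\times|\mathcal{P}|$ compound impedance matrix $Z_\ell$ with $Z_\ell=Z_\ell^{T}$, $Z_\ell$ invertible with $Y_\ell:=Z_\ell^{-1}$, and $\mathrm{Re}\{Z_\ell\}\succ 0$ (positive definite); (ii) every shunt $t\in\mathcal{T}$ (one per node) has a complex $|\mathcal{P}|\times|\mathcal{P}|$ compound admittance matrix $Y_t$ which is either $0$ or satisfies $Y_t=Y_t^{T}$, $Y_t$ invertible, and $\mathrm{Re}\{Y_t\}\succeq 0$. Let $Y=(A_{\mathcal{B}}^{\mathcal{P}})^{T}Y_{\mathcal{L}}A_{\mathcal{B}}^{\mathcal{P}}+Y_{\mathcal{T}}$ be the compound admittance matrix, and let $V,I\in\mathbb{C}^{|\mathcal{N}||\mathcal{P}|}$ satisfy $I=YV$. Let $\mathcal{Z}\subsetneq\mathcal{N}$, $\mathcal{Z}\neq\emptyset$, be such that $I_{\mathcal{Z}}=0$, and let $\mathcal{Z}^{\complement}:=\mathcal{N}\setminus\mathcal{Z}$. Then $Y_{\mathcal{Z}\times\mathcal{Z}}$ is invertible, $$V_{\mathcal{Z}}=-Y_{\mathcal{Z}\times\mathcal{Z}}^{-1}Y_{\mathcal{Z}\times\mathcal{Z}^{\complement}}V_{\mathcal{Z}^{\complement}},$$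 and $$I_{\mathcal{Z}^{\complement}}=(Y/Y_{\mathcal{Z}\times\mathcal{Z}})\,V_{\mathcal{Z}^{\complement}},\qquad Y/Y_{\mathcal{Z}\times\mathcal{Z}}:=Y_{\mathcal{Z}^{\complement}\times\mathcal{Z}^{\complement}}-Y_{\mathcal{Z}^{\complement}\times\mathcal{Z}}Y_{\mathcal{Z}\times\mathcal{Z}}^{-1}Y_{\mathcal{Z}\times\mathcal{Z}^{\complement}}.$$
   Context: Model of a polyphase power grid with an effectively grounded neutral conductor (neutral-to-ground voltage zero, connected to the reference points of all sources), so phase-to-ground voltages describe the system. $V_{n,p}$ and $I_{n,p}$ denote the complex phasors of the phase-to-ground voltage and injected current in phase $p$ of node $n$; $V_n=\mathrm{col}_{p\in\mathcal{P}}(V_{n,p})$, $V=\mathrm{col}_{n\in\mathcal{N}}(V_n)$, and similarly $I_n$, $I$. The shunts are $\mathcal{T}=\mathcal{N}\times\{\mathcal{G}\}$ where $\mathcal{G}$ is the ground node (one shunt from each node to ground). $A_{\mathcal{B}}$ is the edge-to-vertex incidence matrix of the directed graph $\mathcal{B}$ (row for branch $\ell=(m,n)$ has $+1$ in column $m$, $-1$ in column $n$, zeros elsewhere); $A_{\mathcal{B}}^{\mathcal{P}}:=A_{\mathcal{B}}\otimes I_{|\mathcal{P}|}$ (Kronecker product with the $|\mathcal{P}|\times|\mathcal{P}|$ identity). $Y_{\mathcal{L}}:=\mathrm{diag}_{\ell\in\mathcal{L}}(Y_\ell)$ and $Y_{\mathcal{T}}:=\mathrm{diag}_{t\in\mathcal{T}}(Y_t)$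 are block-diagonal. For disjoint node subsets $\mathcal{A},\mathcal{B}'\subseteq\mathcal{N}$, $I_{\mathcal{A}}$, $V_{\mathcal{B}'}$ and $Y_{\mathcal{A}\times\mathcal{B}'}$ denote the corresponding sub-blocks (all phases of the nodes in those sets). $\succ 0$ / $\succeq 0$ denote positive definite / semidefinite. *)

theory Defs
  imports "HOL-Analysis.Analysis"
begin

text \<open>Full network matrices/vectors over nodes x phases are functions on index
  pairs (node, phase); sub-blocks are obtained by restricting the index sets.\<close>

definition Re_mat :: "complex^'p^'p \<Rightarrow> real^'p^'p" where
  "Re_mat M = (\<chi> i j. Re (M $ i $ j))"

definition pos_def :: "real^'p^'p \<Rightarrow> bool" where
  "pos_def M \<longleftrightarrow> transpose M = M \<and> (\<forall>x. x \<noteq> 0 \<longrightarrow> x \<bullet> (M *v x) > 0)"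

definition pos_semidef :: "real^'p^'p \<Rightarrow> bool" where
  "pos_semidef M \<longleftrightarrow> transpose M = M \<and> (\<forall>x. x \<bullet> (M *v x) \<ge> 0)"

definition weakly_connected :: "('n \<times> 'n) set \<Rightarrow> bool" where
  "weakly_connected L \<longleftrightarrow> (L \<union> L\<inverse>)\<^sup>* = UNIV"

definition incidence :: "('n \<times> 'n) \<Rightarrow> 'n \<Rightarrow> complex" where
  "incidence l k = (if k = fst l then 1 else 0) - (if k = snd l then 1 else 0)"

text \<open>Kronecker product A_B (x) I_P; rows indexed by (branch, phase), columns by (node, phase).\<close>
definition incidence_P :: "(('n \<times> 'n) \<times> 'p) \<Rightarrow> ('n \<times> 'p) \<Rightarrow> complex" where
  "incidence_P r c = incidence (fst r) (fst c) * (if snd r = snd c then 1 else 0)"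

definition Y_L :: "(('n \<times> 'n) \<Rightarrow> complex^'p^'p) \<Rightarrow> (('n \<times> 'n) \<times> 'p) \<Rightarrow> (('n \<times> 'n) \<times> 'p) \<Rightarrow> complex" where
  "Y_L Yl r c = (if fst r = fst c then Yl (fst r) $ snd r $ snd c else 0)"

definition Y_T :: "('n \<Rightarrow> complex^'p^'p) \<Rightarrow> ('n \<times> 'p) \<Rightarrow> ('n \<times> 'p) \<Rightarrow> complex" where
  "Y_T Yt r c = (if fst r = fst c then Yt (fst r) $ snd r $ snd c else 0)"

definition compound_Y ::
  "('n \<times> 'n) set \<Rightarrow> (('n \<times> 'n) \<Rightarrow> complex^'p^'p) \<Rightarrow> ('n \<Rightarrow> complex^'p^'p)
    \<Rightarrow> ('n \<times> 'p) \<Rightarrow> ('n \<times> 'p) \<Rightarrow> complex" where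
  "compound_Y L Yl Yt i j =
     (\<Sum>r\<in>L \<times> (UNIV::'p set). \<Sum>s\<in>L \<times> (UNIV::'p set).
        incidence_P r i * Y_L Yl r s * incidence_P s j) + Y_T Yt i j"

definition idx :: "'n set \<Rightarrow> ('n \<times> 'p) set" where
  "idx S = S \<times> UNIV"

definition is_block_inverse :: "'i set \<Rightarrow> ('i \<Rightarrow> 'i \<Rightarrow> complex) \<Rightarrow> ('i \<Rightarrow> 'i \<Rightarrow> complex) \<Rightarrow> bool" where
  "is_block_inverse S Y M \<longleftrightarrow>
     (\<forall>i\<in>S. \<forall>j\<in>S. (\<Sum>k\<in>S. Y i k * M k j) = (if i = j then 1 else 0)) \<and>
     (\<forall>i\<in>S. \<forall>j\<in>S. (\<Sum>k\<in>S. M i k * Y k j) = (if i = j then 1 else 0))"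

definition block_invertible :: "'i set \<Rightarrow> ('i \<Rightarrow> 'i \<Rightarrow> complex) \<Rightarrow> bool" where
  "block_invertible S Y \<longleftrightarrow> (\<exists>M. is_block_inverse S Y M)"

definition block_inv :: "'i set \<Rightarrow> ('i \<Rightarrow> 'i \<Rightarrow> complex) \<Rightarrow> 'i \<Rightarrow> 'i \<Rightarrow> complex" where
  "block_inv S Y = (SOME M. is_block_inverse S Y M)"

definition schur :: "'i set \<Rightarrow> 'i set \<Rightarrow> ('i \<Rightarrow> 'i \<Rightarrow> complex) \<Rightarrow> 'i \<Rightarrow> 'i \<Rightarrow> complex" where
  "schur S C Y i j = Y i j - (\<Sum>k\<in>S. \<Sum>k'\<in>S. Y i k * block_inv S Y k k' * Y k' j)"

end

theory Submission
  imports Defs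
begin

lemma antisym_sum0:
  fixes f :: "'a \<Rightarrow> 'a \<Rightarrow> real"
  assumes "\<And>p q. f p q = - f q p"
  shows "(\<Sum>p\<in>A. \<Sum>q\<in>A. f p q) = 0"
proof -
  have "(\<Sum>p\<in>A. \<Sum>q\<in>A. f p q) = (\<Sum>q\<in>A. \<Sum>p\<in>A. f p q)" by (rule sum.swap)
  also have "\<dots> = (\<Sum>q\<in>A. \<Sum>p\<in>A. - f q p)" by (intro sum.cong refl) (rule assms)
  also have "\<dots> = - (\<Sum>q\<in>A. \<Sum>p\<in>A. f q p)" by (simp only: sum_negf)
  finally show ?thesis by simp
qed

definition qf :: "complex^'p::finite^'p \<Rightarrow> complex^'p \<Rightarrow> complex" where
  "qf M u = (\<Sum>p\<in>UNIV. \<Sum>q\<in>UNIV. cnj (u$p) * M$p$q * u$q)"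

lemma re_term: "Re (cnj a * m * b) = Re m * (Re a * Re b + Im a * Im b) - Im m * (Re a * Im b - Im a * Re b)"
  by (simp add: algebra_simps)

lemma quad_re:
  fixes M :: "complex^'p::finite^'p"
  assumes "transpose M = M"
  shows "Re (qf M u) = (\<chi> p. Re(u$p)) \<bullet> (Re_mat M *v (\<chi> p. Re(u$p)))
        + (\<chi> p. Im(u$p)) \<bullet> (Re_mat M *v (\<chi> p. Im(u$p)))"
proof -
  have sym: "M$p$q = M$q$p" for p q using assms by (metis transpose_def vec_lambda_beta)
  have "Re (qf M u) = (\<Sum>p\<in>UNIV. \<Sum>q\<in>UNIV. Re (M$p$q) * (Re(u$p)*Re(u$q) + Im(u$p)*Im(u$q))
       - Im (M$p$q) * (Re(u$p)*Im(u$q) - Im(u$p)*Re(u$q)))"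
    unfolding qf_def Re_sum re_term ..
  also have "\<dots> = (\<Sum>p\<in>UNIV. \<Sum>q\<in>UNIV. Re (M$p$q) * (Re(u$p)*Re(u$q) + Im(u$p)*Im(u$q)))
       - (\<Sum>p\<in>UNIV. \<Sum>q\<in>UNIV. Im (M$p$q) * (Re(u$p)*Im(u$q) - Im(u$p)*Re(u$q)))"
    by (simp only: sum_subtractf)
  also have "(\<Sum>p\<in>UNIV. \<Sum>q\<in>UNIV. Im (M$p$q) * (Re(u$p)*Im(u$q) - Im(u$p)*Re(u$q))) = 0"
    by (rule antisym_sum0) (simp only: sym[of p q for p q] ring_distribs mult_ac minus_diff_eq)
  also have "(\<Sum>p\<in>UNIV. \<Sum>q\<in>UNIV. Re (M$p$q) * (Re(u$p)*Re(u$q) + Im(u$p)*Im(u$q)))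
     = (\<Sum>p\<in>UNIV. \<Sum>q\<in>UNIV. Re(u$p) * (Re (M$p$q) * Re(u$q))) + 
       (\<Sum>p\<in>UNIV. \<Sum>q\<in>UNIV. Im(u$p) * (Re (M$p$q) * Im(u$q)))"
    by (simp only: sum.distrib[symmetric] distrib_left distrib_right mult_ac)
  also have "\<dots> = (\<chi> p. Re(u$p)) \<bullet> (Re_mat M *v (\<chi> p. Re(u$p)))
        + (\<chi> p. Im(u$p)) \<bullet> (Re_mat M *v (\<chi> p. Im(u$p)))"
    by (simp add: inner_vec_def matrix_vector_mult_def Re_mat_def sum_distrib_left)
  finally show ?thesis by simp
qed

lemma qf_alt: "qf M u = (\<Sum>p\<in>UNIV. cnj (u$p) * (M *v u)$p)"
  unfolding qf_def matrix_vector_mult_def by (simp add: sum_distrib_left mult.assoc)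

lemma pd_pos:
  fixes M :: "complex^'p::finite^'p"
  assumes "transpose M = M" "pos_def (Re_mat M)" "u \<noteq> 0"
  shows "Re (qf M u) > 0"
proof -
  let ?a = "(\<chi> p. Re(u$p))" and ?b = "(\<chi> p. Im(u$p))"
  have pd: "x \<noteq> 0 \<Longrightarrow> x \<bullet> (Re_mat M *v x) > 0" for x using assms(2) unfolding pos_def_def by blast
  have ge: "x \<bullet> (Re_mat M *v x) \<ge> 0" for x by (cases "x = 0") (auto dest: pd[of x])
  have "?a \<noteq> 0 \<or> ?b \<noteq> 0"
  proof (rule ccontr)
    assume "\<not> ?thesis"
    then have "Re (u$p) = 0 \<and> Im (u$p) = 0" for p by (metis vec_lambda_beta zero_index)
    then have "u = 0" by (simp add: vec_eq_iff complex_eq_iff)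
    with assms(3) show False by simp
  qed
  then show ?thesis unfolding quad_re[OF assms(1)]
    using pd ge by (meson add_nonneg_pos add_pos_nonneg)
qed

lemma psd_nonneg:
  fixes M :: "complex^'p::finite^'p"
  assumes "transpose M = M" "pos_semidef (Re_mat M)"
  shows "Re (qf M u) \<ge> 0"
  unfolding quad_re[OF assms(1)] using assms(2) unfolding pos_semidef_def by (simp add: add_nonneg_nonneg)

lemma inv_qf:
  fixes Z :: "complex^'p::finite^'p"
  assumes "invertible Z"
  shows "qf (matrix_inv Z) u = cnj (qf Z (matrix_inv Z *v u))"
proof -
  let ?y = "matrix_inv Z *v u"
  have ZZ: "Z ** matrix_inv Z = mat 1"
    using assms unfolding invertible_def matrix_inv_def by (rule someI2_ex) blast
  have u: "Z *v ?y = u" by (simp add: matrix_vector_mul_assoc ZZ)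
  have "qf (matrix_inv Z) u = (\<Sum>p\<in>UNIV. cnj ((Z *v ?y)$p) * ?y$p)"
    unfolding qf_alt u ..
  also have "\<dots> = (\<Sum>p\<in>UNIV. \<Sum>q\<in>UNIV. cnj (Z$p$q) * cnj (?y$q) * ?y$p)"
    unfolding matrix_vector_mult_def by (simp add: sum_distrib_right)
  also have "\<dots> = cnj (qf Z ?y)"
    unfolding qf_def by (simp add: mult_ac)
  finally show ?thesis .
qed

lemma branch_pos:
  fixes Z :: "complex^'p::finite^'p"
  assumes "transpose Z = Z" "invertible Z" "pos_def (Re_mat Z)" "u \<noteq> 0"
  shows "Re (qf (matrix_inv Z) u) > 0"
proof -
  have ZZ: "Z ** matrix_inv Z = mat 1"
    using assms(2) unfolding invertible_def matrix_inv_def by (rule someI2_ex) blast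
  have u: "Z *v (matrix_inv Z *v u) = u" by (simp add: matrix_vector_mul_assoc ZZ)
  have "matrix_inv Z *v u \<noteq> 0" using u assms(4) by (metis matrix_vector_mult_0_right)
  then show ?thesis unfolding inv_qf[OF assms(2)] using pd_pos[OF assms(1,3)] by simp
qed

lemma shunt_nonneg:
  fixes Y :: "complex^'p::finite^'p"
  assumes "Y = 0 \<or> (transpose Y = Y \<and> invertible Y \<and> pos_semidef (Re_mat Y))"
  shows "Re (qf Y u) \<ge> 0"
  using assms psd_nonneg by (auto simp: qf_def)

lemma sum_prod_split: "(\<Sum>r\<in>A\<times>B. F r) = (\<Sum>a\<in>A. \<Sum>b\<in>B. F (a,b))"
  by (simp add: sum.cartesian_product)

lemma sum_UNIV_split: "(\<Sum>r\<in>(UNIV::('a::finite\<times>'b::finite) set). F r) = (\<Sum>a\<in>UNIV. \<Sum>b\<in>UNIV. F (a,b))"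
  using sum_prod_split[of F UNIV UNIV] by simp

lemma cnj_incidence_P[simp]: "cnj (incidence_P r i) = incidence_P r i"
  unfolding incidence_P_def incidence_def by simp

lemma incidence_P_w:
  fixes v :: "'n::finite \<times> 'p::finite \<Rightarrow> complex"
  shows "(\<Sum>j\<in>UNIV. incidence_P (l,p) j * v j) = v (fst l, p) - v (snd l, p)"
proof -
  have "(\<Sum>j\<in>UNIV. incidence_P (l,p) j * v j) = (\<Sum>k\<in>UNIV. \<Sum>q\<in>UNIV. incidence_P (l,p) (k,q) * v (k,q))"
    unfolding UNIV_Times_UNIV[symmetric] sum.cartesian_product by simp
  also have "\<dots> = (\<Sum>k\<in>UNIV. incidence l k * v (k,p))"
  proof (intro sum.cong refl)
    fix k
    have "(\<Sum>q\<in>UNIV. incidence_P (l,p) (k,q) * v (k,q)) = (\<Sum>q\<in>UNIV. if p = q then incidence l k * v (k,q) else 0)"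
      unfolding incidence_P_def by (intro sum.cong refl) simp
    then show "(\<Sum>q\<in>UNIV. incidence_P (l,p) (k,q) * v (k,q)) = incidence l k * v (k,p)"
      by (simp add: sum.delta)
  qed
  also have "\<dots> = (\<Sum>k\<in>UNIV. (if k = fst l then v (k,p) else 0)) - (\<Sum>k\<in>UNIV. (if k = snd l then v (k,p) else 0))"
    unfolding incidence_def sum_subtractf[symmetric] by (intro sum.cong refl) (simp add: left_diff_distrib)
  also have "\<dots> = v (fst l, p) - v (snd l, p)" by simp
  finally show ?thesis .
qed

lemma four_sum:
  fixes c d :: "'i \<Rightarrow> complex"
  shows "(\<Sum>i\<in>I. \<Sum>j\<in>J. c i * (\<Sum>r\<in>R. \<Sum>s\<in>S. f r i * g r s * h s j) * d j)
       = (\<Sum>r\<in>R. \<Sum>s\<in>S. (\<Sum>i\<in>I. c i * f r i) * g r s * (\<Sum>j\<in>J. h s j * d j))"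
proof -
  have "(\<Sum>i\<in>I. \<Sum>j\<in>J. c i * (\<Sum>r\<in>R. \<Sum>s\<in>S. f r i * g r s * h s j) * d j)
      = (\<Sum>i\<in>I. \<Sum>j\<in>J. \<Sum>r\<in>R. \<Sum>s\<in>S. c i * f r i * g r s * h s j * d j)"
    by (simp add: sum_distrib_left sum_distrib_right mult_ac)
  also have "\<dots> = (\<Sum>i\<in>I. \<Sum>r\<in>R. \<Sum>j\<in>J. \<Sum>s\<in>S. c i * f r i * g r s * h s j * d j)"
    by (intro sum.cong refl) (rule sum.swap)
  also have "\<dots> = (\<Sum>i\<in>I. \<Sum>r\<in>R. \<Sum>s\<in>S. \<Sum>j\<in>J. c i * f r i * g r s * h s j * d j)"
    by (intro sum.cong refl) (rule sum.swap)
  also have "\<dots> = (\<Sum>r\<in>R. \<Sum>i\<in>I. \<Sum>s\<in>S. \<Sum>j\<in>J. c i * f r i * g r s * h s j * d j)"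
    by (rule sum.swap)
  also have "\<dots> = (\<Sum>r\<in>R. \<Sum>s\<in>S. \<Sum>i\<in>I. \<Sum>j\<in>J. c i * f r i * g r s * h s j * d j)"
    by (intro sum.cong refl) (rule sum.swap)
  also have "\<dots> = (\<Sum>r\<in>R. \<Sum>s\<in>S. (\<Sum>i\<in>I. c i * f r i) * g r s * (\<Sum>j\<in>J. h s j * d j))"
    by (simp add: sum_distrib_left sum_distrib_right mult_ac)
  finally show ?thesis .
qed

lemma branch_part:
  fixes v :: "'n::finite \<times> 'p::finite \<Rightarrow> complex" and Yl :: "'n \<times> 'n \<Rightarrow> complex^'p^'p"
  shows "(\<Sum>i\<in>UNIV. \<Sum>j\<in>UNIV. cnj (v i) *
      (\<Sum>r\<in>L \<times> (UNIV::'p set). \<Sum>s\<in>L \<times> (UNIV::'p set). incidence_P r i * Y_L Yl r s * incidence_P s j) * v j)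
    = (\<Sum>l\<in>L. qf (Yl l) (\<chi> p. v (fst l, p) - v (snd l, p)))"
proof -
  define w where "w r = (\<Sum>j\<in>UNIV. incidence_P r j * v j)" for r
  have w: "w (l,p) = v (fst l, p) - v (snd l, p)" for l p unfolding w_def by (rule incidence_P_w)
  have cw: "cnj (w r) = (\<Sum>i\<in>UNIV. cnj (v i) * incidence_P r i)" for r
    unfolding w_def by (simp add: mult.commute)
  have "(\<Sum>i\<in>UNIV. \<Sum>j\<in>UNIV. cnj (v i) *
      (\<Sum>r\<in>L \<times> (UNIV::'p set). \<Sum>s\<in>L \<times> (UNIV::'p set). incidence_P r i * Y_L Yl r s * incidence_P s j) * v j)
    = (\<Sum>r\<in>L \<times> (UNIV::'p set). \<Sum>s\<in>L \<times> (UNIV::'p set). cnj (w r) * Y_L Yl r s * w s)"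
    unfolding four_sum cw unfolding w_def ..
  also have "\<dots> = (\<Sum>l\<in>L. \<Sum>p\<in>UNIV. \<Sum>l'\<in>L. \<Sum>q\<in>UNIV. cnj (w (l,p)) * Y_L Yl (l,p) (l',q) * w (l',q))"
    unfolding sum_prod_split ..
  also have "\<dots> = (\<Sum>l\<in>L. \<Sum>p\<in>UNIV. \<Sum>l'\<in>L. if l' = l then (\<Sum>q\<in>UNIV. cnj (w (l,p)) * Yl l $ p $ q * w (l,q)) else 0)"
    unfolding Y_L_def by (intro sum.cong refl) auto
  also have "\<dots> = (\<Sum>l\<in>L. \<Sum>p\<in>UNIV. \<Sum>q\<in>UNIV. cnj (w (l,p)) * Yl l $ p $ q * w (l,q))"
    by (intro sum.cong refl) (simp add: sum.delta')
  also have "\<dots> = (\<Sum>l\<in>L. qf (Yl l) (\<chi> p. v (fst l, p) - v (snd l, p)))"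
    unfolding qf_def w by simp
  finally show ?thesis .
qed

lemma shunt_part:
  fixes v :: "'n::finite \<times> 'p::finite \<Rightarrow> complex" and Yt :: "'n \<Rightarrow> complex^'p^'p"
  shows "(\<Sum>i\<in>UNIV. \<Sum>j\<in>UNIV. cnj (v i) * Y_T Yt i j * v j)
    = (\<Sum>n\<in>UNIV. qf (Yt n) (\<chi> p. v (n, p)))"
proof -
  have "(\<Sum>i\<in>UNIV. \<Sum>j\<in>UNIV. cnj (v i) * Y_T Yt i j * v j)
     = (\<Sum>n\<in>UNIV. \<Sum>p\<in>UNIV. \<Sum>n'\<in>UNIV. \<Sum>q\<in>UNIV. cnj (v (n,p)) * Y_T Yt (n,p) (n',q) * v (n',q))"
    unfolding sum_UNIV_split ..
  also have "\<dots> = (\<Sum>n\<in>UNIV. \<Sum>p\<in>UNIV. \<Sum>n'\<in>UNIV. if n' = n then (\<Sum>q\<in>UNIV. cnj (v (n,p)) * Yt n $ p $ q * v (n,q)) else 0)"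
    unfolding Y_T_def by (intro sum.cong refl) auto
  also have "\<dots> = (\<Sum>n\<in>UNIV. qf (Yt n) (\<chi> p. v (n, p)))"
    unfolding qf_def by (simp add: sum.delta')
  finally show ?thesis .
qed

lemma sum_restrict:
  fixes g :: "'a::finite \<Rightarrow> 'b::comm_monoid_add"
  assumes "\<And>k. k \<notin> S \<Longrightarrow> g k = 0"
  shows "(\<Sum>k\<in>UNIV. g k) = (\<Sum>k\<in>S. g k)"
  by (rule sum.mono_neutral_right) (auto simp: assms)

lemma const_on_conn:
  fixes v :: "'n \<times> 'p \<Rightarrow> complex"
  assumes conn: "weakly_connected L"
    and e: "\<And>l p. l \<in> L \<Longrightarrow> v (fst l, p) = v (snd l, p)"
  shows "v (a,p) = v (b,p)"
proof -
  have "(a,b) \<in> (L \<union> L\<inverse>)\<^sup>*" using conn unfolding weakly_connected_def by simp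
  then show ?thesis
  proof (induction rule: rtrancl_induct)
    case base then show ?case by simp
  next
    case (step y z)
    then have "v (y,p) = v (z,p)" using e[of "(y,z)" p] e[of "(z,y)" p] by auto
    with step show ?case by simp
  qed
qed

lemma kernel_trivial:
  fixes L :: "('n::finite \<times> 'n) set"
    and Zl Yl :: "'n \<times> 'n \<Rightarrow> complex^'p::finite^'p"
    and Yt :: "'n \<Rightarrow> complex^'p^'p"
    and v :: "'n \<times> 'p \<Rightarrow> complex"
  assumes conn: "weakly_connected L"
    and branch: "\<And>l. l \<in> L \<Longrightarrow> transpose (Zl l) = Zl l \<and> invertible (Zl l)
                       \<and> Yl l = matrix_inv (Zl l) \<and> pos_def (Re_mat (Zl l))"
    and shunt: "\<And>n. Yt n = 0 \<or> (transpose (Yt n) = Yt n \<and> invertible (Yt n)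
                       \<and> pos_semidef (Re_mat (Yt n)))"
    and Zproper: "Zs \<noteq> UNIV"
    and supp: "\<And>i. i \<notin> idx Zs \<Longrightarrow> v i = 0"
    and ker: "\<And>i. i \<in> idx Zs \<Longrightarrow> (\<Sum>j\<in>idx Zs. compound_Y L Yl Yt i j * v j) = 0"
  shows "v i = 0"
proof (rule ccontr)
  assume vnz: "v i \<noteq> 0"
  let ?Y = "compound_Y L Yl Yt"
  let ?u = "\<lambda>l. (\<chi> p. v (fst l, p) - v (snd l, p))"
  have Q0: "(\<Sum>i\<in>UNIV. \<Sum>j\<in>UNIV. cnj (v i) * ?Y i j * v j) = 0"
  proof -
    have "(\<Sum>i\<in>UNIV. \<Sum>j\<in>UNIV. cnj (v i) * ?Y i j * v j) = (\<Sum>i\<in>UNIV. cnj (v i) * (\<Sum>j\<in>UNIV. ?Y i j * v j))"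
      by (simp add: sum_distrib_left mult.assoc)
    also have "\<dots> = 0"
    proof (intro sum.neutral ballI)
      fix i
      show "cnj (v i) * (\<Sum>j\<in>UNIV. ?Y i j * v j) = 0"
      proof (cases "i \<in> idx Zs")
        case True
        have "(\<Sum>j\<in>UNIV. ?Y i j * v j) = (\<Sum>j\<in>idx Zs. ?Y i j * v j)"
          by (rule sum_restrict) (simp add: supp)
        then show ?thesis using ker[OF True] by simp
      qed (simp add: supp)
    qed
    finally show ?thesis .
  qed
  have Qsplit: "(\<Sum>i\<in>UNIV. \<Sum>j\<in>UNIV. cnj (v i) * ?Y i j * v j)
     = (\<Sum>l\<in>L. qf (Yl l) (?u l)) + (\<Sum>n\<in>UNIV. qf (Yt n) (\<chi> p. v (n, p)))"
    unfolding compound_Y_def branch_part[symmetric] shunt_part[symmetric]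
    by (simp add: distrib_left distrib_right sum.distrib)
  have "\<exists>l\<in>L. ?u l \<noteq> 0"
  proof (rule ccontr)
    assume na: "\<not> (\<exists>l\<in>L. ?u l \<noteq> 0)"
    have e: "v (fst l, p) = v (snd l, p)" if "l \<in> L" for l p
    proof -
      have "(?u l) $ p = 0" using na that by simp
      then show ?thesis by simp
    qed
    have c: "v (a,p) = v (b,p)" for a b p by (rule const_on_conn[OF conn]) (rule e)
    obtain b where "b \<notin> Zs" using Zproper by blast
    then have "v (b,p) = 0" for p using supp by (simp add: idx_def)
    then show False using c vnz by (metis surj_pair)
  qed
  then obtain l where lL: "l \<in> L" and ul: "?u l \<noteq> 0" by blast
  have fin: "finite L" by simp
  have "0 < (\<Sum>l\<in>L. Re (qf (Yl l) (?u l)))"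
  proof (rule sum_pos2[OF fin lL])
    show "0 < Re (qf (Yl l) (?u l))" using branch[OF lL] branch_pos ul by metis
    show "0 \<le> Re (qf (Yl i) (?u i))" if iL: "i \<in> L" for i
    proof -
      show "0 \<le> Re (qf (Yl i) (?u i))"
      proof (cases "?u i = 0")
        case True then show ?thesis by (simp add: qf_def)
      next
        case False then show ?thesis using branch[OF iL] branch_pos
          by (metis less_eq_real_def)
      qed
    qed
  qed
  moreover have "0 \<le> (\<Sum>n\<in>UNIV. Re (qf (Yt n) (\<chi> p. v (n, p))))"
    by (rule sum_nonneg) (rule shunt_nonneg[OF shunt])
  ultimately have "0 < Re (\<Sum>i\<in>UNIV. \<Sum>j\<in>UNIV. cnj (v i) * ?Y i j * v j)"
    unfolding Qsplit by (simp add: Re_sum)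
  with Q0 show False by simp
qed

lemma block_invertible_Y:
  fixes L :: "('n::finite \<times> 'n) set"
    and Zl Yl :: "'n \<times> 'n \<Rightarrow> complex^'p::finite^'p"
    and Yt :: "'n \<Rightarrow> complex^'p^'p"
  assumes conn: "weakly_connected L"
    and branch: "\<And>l. l \<in> L \<Longrightarrow> transpose (Zl l) = Zl l \<and> invertible (Zl l)
                       \<and> Yl l = matrix_inv (Zl l) \<and> pos_def (Re_mat (Zl l))"
    and shunt: "\<And>n. Yt n = 0 \<or> (transpose (Yt n) = Yt n \<and> invertible (Yt n)
                       \<and> pos_semidef (Re_mat (Yt n)))"
    and Zproper: "Zs \<noteq> UNIV"
  shows "block_invertible (idx Zs) (compound_Y L Yl Yt)"
proof -
  let ?Y = "compound_Y L Yl Yt" and ?S = "idx Zs :: ('n \<times> 'p) set"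
  define A :: "complex^('n \<times> 'p)^('n \<times> 'p)" where
    "A = (\<chi> i j. if i \<in> ?S \<and> j \<in> ?S then ?Y i j else if i = j then 1 else 0)"
  have rowS: "(\<Sum>k\<in>UNIV. A$i$k * x k) = (\<Sum>k\<in>?S. ?Y i k * x k)" if "i \<in> ?S" for i x
  proof -
    have "(\<Sum>k\<in>UNIV. A$i$k * x k) = (\<Sum>k\<in>?S. A$i$k * x k)"
      by (rule sum_restrict) (use that in \<open>auto simp: A_def\<close>)
    also have "\<dots> = (\<Sum>k\<in>?S. ?Y i k * x k)" using that by (simp add: A_def)
    finally show ?thesis .
  qed
  have colS: "(\<Sum>k\<in>UNIV. x k * A$k$j) = (\<Sum>k\<in>?S. x k * ?Y k j)" if "j \<in> ?S" for j x
  proof -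
    have "(\<Sum>k\<in>UNIV. x k * A$k$j) = (\<Sum>k\<in>?S. x k * A$k$j)"
      by (rule sum_restrict) (use that in \<open>auto simp: A_def\<close>)
    also have "\<dots> = (\<Sum>k\<in>?S. x k * ?Y k j)" using that by (simp add: A_def)
    finally show ?thesis .
  qed
  have ker: "x = 0" if Ax: "A *v x = 0" for x
  proof -
    have comp: "(\<Sum>k\<in>UNIV. A$i$k * x$k) = 0" for i
      proof -
      have "(A *v x)$i = 0" using Ax by simp
      then show ?thesis by (simp add: matrix_vector_mult_def)
    qed
    have supp: "x$i = 0" if "i \<notin> ?S" for i
    proof -
      have "(\<Sum>k\<in>UNIV. A$i$k * x$k) = (\<Sum>k\<in>UNIV. if k = i then x$k else 0)"
        by (intro sum.cong refl) (use that in \<open>simp add: A_def\<close>)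
      then show ?thesis using comp[of i] by simp
    qed
    have "(\<lambda>i. x$i) i = 0" for i
    proof (rule kernel_trivial[OF conn branch shunt Zproper])
      show "x$i = 0" if "i \<notin> ?S" for i using supp that by simp
      show "(\<Sum>j\<in>?S. ?Y i j * x$j) = 0" if "i \<in> ?S" for i
        using comp[of i] rowS[OF that, of "\<lambda>k. x$k"] by simp
    qed
    then show ?thesis by (simp add: vec_eq_iff)
  qed
  then obtain B where BA: "B ** A = mat 1" using matrix_left_invertible_ker by blast
  then have AB: "A ** B = mat 1" using matrix_left_right_inverse by blast
  have "is_block_inverse ?S ?Y (\<lambda>i j. B$i$j)"
    unfolding is_block_inverse_def
  proof (intro conjI ballI)
    fix i j assume i: "i \<in> ?S" and j: "j \<in> ?S"
    have "(A ** B)$i$j = (\<Sum>k\<in>UNIV. A$i$k * B$k$j)" by (simp add: matrix_matrix_mult_def)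
    then show "(\<Sum>k\<in>?S. ?Y i k * B$k$j) = (if i = j then 1 else 0)"
      using rowS[OF i, of "\<lambda>k. B$k$j"] AB by (simp add: mat_def)
    have "(B ** A)$i$j = (\<Sum>k\<in>UNIV. B$i$k * A$k$j)" by (simp add: matrix_matrix_mult_def)
    then show "(\<Sum>k\<in>?S. B$i$k * ?Y k j) = (if i = j then 1 else 0)"
      using colS[OF j, of "\<lambda>k. B$i$k"] BA by (simp add: mat_def)
  qed
  then show ?thesis unfolding block_invertible_def by blast
qed

lemma triple_swap:
  fixes a :: "'i \<Rightarrow> complex"
  shows "(\<Sum>j\<in>S. y j * (\<Sum>k\<in>S. m j k * (\<Sum>j'\<in>C. z k j' * a j')))
       = (\<Sum>j'\<in>C. (\<Sum>j\<in>S. \<Sum>k\<in>S. y j * m j k * z k j') * a j')"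
proof -
  have "(\<Sum>j\<in>S. y j * (\<Sum>k\<in>S. m j k * (\<Sum>j'\<in>C. z k j' * a j')))
     = (\<Sum>j\<in>S. \<Sum>k\<in>S. \<Sum>j'\<in>C. y j * m j k * z k j' * a j')"
    by (simp add: sum_distrib_left mult_ac)
  also have "\<dots> = (\<Sum>j\<in>S. \<Sum>j'\<in>C. \<Sum>k\<in>S. y j * m j k * z k j' * a j')"
    by (intro sum.cong refl) (rule sum.swap)
  also have "\<dots> = (\<Sum>j'\<in>C. \<Sum>j\<in>S. \<Sum>k\<in>S. y j * m j k * z k j' * a j')"
    by (rule sum.swap)
  also have "\<dots> = (\<Sum>j'\<in>C. (\<Sum>j\<in>S. \<Sum>k\<in>S. y j * m j k * z k j') * a j')"
    by (simp add: sum_distrib_right)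
  finally show ?thesis .
qed

lemma double_swap:
  fixes a :: "'i \<Rightarrow> complex"
  shows "(\<Sum>k\<in>S. (\<Sum>k'\<in>S. m k' * y k' k) * a k) = (\<Sum>k'\<in>S. m k' * (\<Sum>k\<in>S. y k' k * a k))"
proof -
  have "(\<Sum>k\<in>S. (\<Sum>k'\<in>S. m k' * y k' k) * a k) = (\<Sum>k\<in>S. \<Sum>k'\<in>S. m k' * y k' k * a k)"
    by (simp add: sum_distrib_right)
  also have "\<dots> = (\<Sum>k'\<in>S. \<Sum>k\<in>S. m k' * y k' k * a k)" by (rule sum.swap)
  also have "\<dots> = (\<Sum>k'\<in>S. m k' * (\<Sum>k\<in>S. y k' k * a k))"
    by (simp add: sum_distrib_left mult.assoc)
  finally show ?thesis .
qed

theorem lemma1: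
  fixes L :: "('n::finite \<times> 'n) set"
    and Zl Yl :: "'n \<times> 'n \<Rightarrow> complex^'p::finite^'p"
    and Yt :: "'n \<Rightarrow> complex^'p^'p"
    and V I :: "'n \<times> 'p \<Rightarrow> complex"
    and Zs :: "'n set"
  assumes conn: "weakly_connected L"
    and branch: "\<And>l. l \<in> L \<Longrightarrow> transpose (Zl l) = Zl l \<and> invertible (Zl l)
                       \<and> Yl l = matrix_inv (Zl l) \<and> pos_def (Re_mat (Zl l))"
    and shunt: "\<And>n. Yt n = 0 \<or> (transpose (Yt n) = Yt n \<and> invertible (Yt n)
                       \<and> pos_semidef (Re_mat (Yt n)))"
    and IYV: "\<And>i. I i = (\<Sum>j\<in>UNIV. compound_Y L Yl Yt i j * V j)"
    and Zne: "Zs \<noteq> {}" and Zproper: "Zs \<noteq> UNIV"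
    and IZ: "\<And>i. i \<in> idx Zs \<Longrightarrow> I i = 0"
  shows "block_invertible (idx Zs) (compound_Y L Yl Yt)
    \<and> (\<forall>i\<in>idx Zs. V i = - (\<Sum>k\<in>idx Zs. block_inv (idx Zs) (compound_Y L Yl Yt) i k *
           (\<Sum>j\<in>idx (UNIV - Zs). compound_Y L Yl Yt k j * V j)))
    \<and> (\<forall>i\<in>idx (UNIV - Zs). I i = (\<Sum>j\<in>idx (UNIV - Zs).
           schur (idx Zs) (idx (UNIV - Zs)) (compound_Y L Yl Yt) i j * V j))"
proof -
  let ?Y = "compound_Y L Yl Yt" and ?S = "idx Zs :: ('n \<times> 'p) set" and ?C = "idx (UNIV - Zs) :: ('n \<times> 'p) set"
  let ?M = "block_inv ?S ?Y"
  have binv: "block_invertible ?S ?Y" by (rule block_invertible_Y[OF conn branch shunt Zproper])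
  have hM: "is_block_inverse ?S ?Y ?M"
    using binv unfolding block_invertible_def block_inv_def by (rule someI_ex)
  have MY: "(\<Sum>k\<in>?S. ?M i k * ?Y k j) = (if i = j then 1 else 0)" if "i \<in> ?S" "j \<in> ?S" for i j
    using hM that unfolding is_block_inverse_def by blast
  have un: "?S \<union> ?C = UNIV" and dj: "?S \<inter> ?C = {}" by (auto simp: idx_def)
  have split: "I i = (\<Sum>j\<in>?S. ?Y i j * V j) + (\<Sum>j\<in>?C. ?Y i j * V j)" for i
    unfolding IYV un[symmetric] by (rule sum.union_disjoint) (use dj in auto)
  have VS: "V i = - (\<Sum>k\<in>?S. ?M i k * (\<Sum>j\<in>?C. ?Y k j * V j))" if i: "i \<in> ?S" for i
  proof -
    have Sk: "(\<Sum>j\<in>?S. ?Y k j * V j) = - (\<Sum>j\<in>?C. ?Y k j * V j)" if "k \<in> ?S" for k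
      using split[of k] IZ[OF that] by (simp add: eq_neg_iff_add_eq_0 add.commute)
    have "V i = (\<Sum>k\<in>?S. if i = k then V k else 0)"
      using i by (simp add: sum.delta)
    also have "\<dots> = (\<Sum>k\<in>?S. (if i = k then 1 else 0) * V k)"
      by (intro sum.cong refl) simp
    also have "\<dots> = (\<Sum>k\<in>?S. (\<Sum>k'\<in>?S. ?M i k' * ?Y k' k) * V k)"
      using MY[OF i] by simp
    also have "\<dots> = (\<Sum>k'\<in>?S. ?M i k' * (\<Sum>k\<in>?S. ?Y k' k * V k))"
      by (rule double_swap)
    also have "\<dots> = (\<Sum>k'\<in>?S. ?M i k' * (- (\<Sum>j\<in>?C. ?Y k' j * V j)))"
      by (intro sum.cong refl) (simp add: Sk)
    also have "\<dots> = - (\<Sum>k\<in>?S. ?M i k * (\<Sum>j\<in>?C. ?Y k j * V j))"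
      by (simp add: sum_negf)
    finally show ?thesis .
  qed
  have IC: "I i = (\<Sum>j\<in>?C. schur ?S ?C ?Y i j * V j)" if i: "i \<in> ?C" for i
  proof -
    have "(\<Sum>j\<in>?S. ?Y i j * V j) = (\<Sum>j\<in>?S. ?Y i j * (- (\<Sum>k\<in>?S. ?M j k * (\<Sum>j'\<in>?C. ?Y k j' * V j'))))"
      by (intro sum.cong refl) (simp add: VS)
    also have "\<dots> = - (\<Sum>j\<in>?S. ?Y i j * (\<Sum>k\<in>?S. ?M j k * (\<Sum>j'\<in>?C. ?Y k j' * V j')))"
      by (simp add: sum_negf)
    also have "\<dots> = - (\<Sum>j'\<in>?C. (\<Sum>j\<in>?S. \<Sum>k\<in>?S. ?Y i j * ?M j k * ?Y k j') * V j')"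
      by (simp only: triple_swap)
    finally have e: "(\<Sum>j\<in>?S. ?Y i j * V j) = - (\<Sum>j'\<in>?C. (\<Sum>j\<in>?S. \<Sum>k\<in>?S. ?Y i j * ?M j k * ?Y k j') * V j')" .
    have "(\<Sum>j\<in>?C. schur ?S ?C ?Y i j * V j)
        = (\<Sum>j\<in>?C. ?Y i j * V j) - (\<Sum>j\<in>?C. (\<Sum>k\<in>?S. \<Sum>k'\<in>?S. ?Y i k * ?M k k' * ?Y k' j) * V j)"
      unfolding schur_def by (simp add: left_diff_distrib sum_subtractf)
    then show ?thesis using split[of i] e by simp
  qed
  show ?thesis using binv VS IC by blast
qed

end
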